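(* Let $\mathfrak{k}$ be a field, $n\ge2$, and ${\mathcal A}=(x_{i_1\ldots i_n})_{1\le i_j\le r_j}$ a box-shaped matrix of distinct indeterminates with polynomial ring $\mathfrak{k}[{\mathcal A}]$. Order the variables by $x_{i_1\ldots i_n}\le x_{j_1\ldots j_n}$ if and only if $(i_1,\dots,i_n)\le(j_1,\dots,j_n)$ in the lexicographic order on ${\mathbb N}^n$, and use the degree reverse lexicographic monomial order induced by this variable order. Then the set of all $2\times2$ minors of ${\mathcal A}$ is a Gröbner basis of $I_2({\mathcal A})$.
   Context: $\mathfrak{k}$ is algebraically closed of characteristic $0$. The $2\times2$ minors of a box-shaped matrix $(a_{i_1\ldots i_n})$ are $a_{i_1\ldots i_l\ldots i_n}a_{j_1\ldots j_l\ldots j_n}-a_{i_1\ldots i_{l-1}j_li_{l+1}\ldots i_n}a_{j_1\ldots j_{l-1}i_lj_{l+1}\ldots j_n}$ for any coordinate $l\in\{1,\dots,n\}$ and any two index points; $I_2({\mathcal A})$ is the ideal they generate. *)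

theory Defs
  imports "HOL-Library.Poly_Mapping"
begin

text \<open>Multivariate polynomials over a field in variables indexed by index points (nat lists); monomials and polynomials are finitely supported maps.\<close>

type_synonym mon = "nat list \<Rightarrow>\<^sub>0 nat"
type_synonym 'k mpoly = "mon \<Rightarrow>\<^sub>0 'k"

definition box :: "nat list \<Rightarrow> nat list set" where
  "box r = {i. length i = length r \<and> (\<forall>j<length r. 1 \<le> i ! j \<and> i ! j \<le> r ! j)}"

definition var :: "nat list \<Rightarrow> 'k::comm_ring_1 mpoly" where
  "var a = Poly_Mapping.single (Poly_Mapping.single a 1) 1"

definition poly_ring :: "nat list \<Rightarrow> 'k::comm_ring_1 mpoly set" where
  "poly_ring r = {p :: 'k mpoly. \<forall>m\<in>Poly_Mapping.keys p. Poly_Mapping.keys m \<subseteq> box r}"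

definition ideal_gen :: "'k::comm_ring_1 mpoly set \<Rightarrow> 'k mpoly set \<Rightarrow> 'k mpoly set" where
  "ideal_gen R G = {f. \<exists>S h. finite S \<and> S \<subseteq> G \<and> (\<forall>g\<in>S. h g \<in> R) \<and> f = (\<Sum>g\<in>S. h g * g)}"

definition minors2 :: "nat list \<Rightarrow> 'k::comm_ring_1 mpoly set" where
  "minors2 r = {var a * var b - var (a[l := b ! l]) * var (b[l := a ! l]) | a b l.
                  a \<in> box r \<and> b \<in> box r \<and> l < length r}"

definition I2 :: "nat list \<Rightarrow> 'k::comm_ring_1 mpoly set" where
  "I2 r = ideal_gen (poly_ring r) (minors2 r)"

definition lex_less :: "nat list \<Rightarrow> nat list \<Rightarrow> bool" where
  "lex_less a b \<longleftrightarrow> (\<exists>k<length a. k < length b \<and> take k a = take k b \<and> a ! k < b ! k)"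

definition mdeg :: "mon \<Rightarrow> nat" where
  "mdeg m = (\<Sum>v\<in>Poly_Mapping.keys m. Poly_Mapping.lookup m v)"

definition drl_less :: "nat list \<Rightarrow> mon \<Rightarrow> mon \<Rightarrow> bool" where
  "drl_less r m1 m2 \<longleftrightarrow> mdeg m1 < mdeg m2 \<or>
     (mdeg m1 = mdeg m2 \<and> (\<exists>v\<in>box r. Poly_Mapping.lookup m2 v < Poly_Mapping.lookup m1 v \<and>
        (\<forall>w\<in>box r. lex_less w v \<longrightarrow> Poly_Mapping.lookup m1 w = Poly_Mapping.lookup m2 w)))"

definition lead_mon :: "nat list \<Rightarrow> 'k::comm_ring_1 mpoly \<Rightarrow> mon" where
  "lead_mon r p = (THE m. m \<in> Poly_Mapping.keys p \<and> (\<forall>m'\<in>Poly_Mapping.keys p. m' \<noteq> m \<longrightarrow> drl_less r m' m))"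

definition mon_dvd :: "mon \<Rightarrow> mon \<Rightarrow> bool" where
  "mon_dvd a b \<longleftrightarrow> (\<forall>v. Poly_Mapping.lookup a v \<le> Poly_Mapping.lookup b v)"

definition groebner_basis :: "nat list \<Rightarrow> 'k::comm_ring_1 mpoly set \<Rightarrow> 'k mpoly set \<Rightarrow> bool" where
  "groebner_basis r G I \<longleftrightarrow> G \<subseteq> I \<and>
     (\<forall>f\<in>I. f \<noteq> 0 \<longrightarrow> (\<exists>g\<in>G. g \<noteq> 0 \<and> mon_dvd (lead_mon r g) (lead_mon r f)))"

end

theory Submission
  imports Defs "HOL-Library.List_Lexorder"
begin

abbreviation lk where "lk \<equiv> Poly_Mapping.lookup"
abbreviation kys where "kys \<equiv> Poly_Mapping.keys"

lemma lex_less_iff: "length a = length b \<Longrightarrow> lex_less a b \<longleftrightarrow> a < b"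
  unfolding lex_less_def list_less_def lexord_take_index_conv by auto

lemma box_len: "a \<in> box r \<Longrightarrow> length a = length r"
  by (simp add: box_def)

lemma finite_box: "finite (box r)"
proof -
  have "box r \<subseteq> {xs. set xs \<subseteq> {0..Max (set r)} \<and> length xs = length r}"
  proof
    fix xs assume xs: "xs \<in> box r"
    have len: "length xs = length r" and bd: "\<forall>j<length r. xs ! j \<le> r ! j"
      using xs unfolding box_def by auto
    have "x \<le> Max (set r)" if "x \<in> set xs" for x
    proof -
      have "\<exists>j<length xs. xs ! j = x" using that by (simp add: in_set_conv_nth)
      then obtain j where j: "j < length xs" "xs ! j = x" by blast
      have jr: "j < length r" using j len by simp
      have "x \<le> r ! j" using bd jr j(2) by blast
      also have "\<dots> \<le> Max (set r)" using jr by (simp add: Max_ge)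
      finally show ?thesis .
    qed
    then have "set xs \<subseteq> {0..Max (set r)}" by auto
    then show "xs \<in> {xs. set xs \<subseteq> {0..Max (set r)} \<and> length xs = length r}"
      using len by simp
  qed
  then show ?thesis by (rule finite_subset) (rule finite_lists_length_eq, simp)
qed

lemma drl_less_alt: "drl_less r m1 m2 \<longleftrightarrow> mdeg m1 < mdeg m2 \<or>
     (mdeg m1 = mdeg m2 \<and> (\<exists>v\<in>box r. lk m2 v < lk m1 v \<and>
        (\<forall>w\<in>box r. w < v \<longrightarrow> lk m1 w = lk m2 w)))"
proof -
  have e: "\<And>v w. v\<in>box r \<Longrightarrow> w\<in>box r \<Longrightarrow> lex_less w v \<longleftrightarrow> w < v"
  proof -
    fix v w assume "v\<in>box r" "w\<in>box r"
    then have "length w = length v" using box_len by metis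
    then show "lex_less w v \<longleftrightarrow> w < v" by (rule lex_less_iff)
  qed
  have q: "(\<exists>v\<in>box r. lk m2 v < lk m1 v \<and> (\<forall>w\<in>box r. lex_less w v \<longrightarrow> lk m1 w = lk m2 w)) =
     (\<exists>v\<in>box r. lk m2 v < lk m1 v \<and> (\<forall>w\<in>box r. w < v \<longrightarrow> lk m1 w = lk m2 w))"
    by (rule bex_cong[OF refl]) (use e in blast)
  show ?thesis unfolding drl_less_def q ..
qed

lemma drl_irrefl: "\<not> drl_less r m m"
  by (simp add: drl_less_def)

lemma drl_trans:
  assumes "drl_less r m1 m2" "drl_less r m2 m3" shows "drl_less r m1 m3"
proof (cases "mdeg m1 < mdeg m2 \<or> mdeg m2 < mdeg m3")
  case True
  then show ?thesis using assms unfolding drl_less_alt by auto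
next
  case False
  then obtain v1 where v1: "v1 \<in> box r" "lk m2 v1 < lk m1 v1" "\<forall>w\<in>box r. w < v1 \<longrightarrow> lk m1 w = lk m2 w"
    and d1: "mdeg m1 = mdeg m2"
    using assms(1) unfolding drl_less_alt by auto
  obtain v2 where v2: "v2 \<in> box r" "lk m3 v2 < lk m2 v2" "\<forall>w\<in>box r. w < v2 \<longrightarrow> lk m2 w = lk m3 w"
    and d2: "mdeg m2 = mdeg m3"
    using assms(2) False unfolding drl_less_alt by auto
  have d: "mdeg m1 = mdeg m3" using d1 d2 by simp
  consider "v1 < v2" | "v2 < v1" | "v1 = v2" by fastforce
  then show ?thesis
  proof cases
    case 1
    have "\<forall>w\<in>box r. w < v1 \<longrightarrow> lk m1 w = lk m3 w" using v1(3) v2(3) 1 by auto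
    moreover have "lk m3 v1 < lk m1 v1" using v1 v2(3) 1 by auto
    ultimately show ?thesis unfolding drl_less_alt using v1(1) d by blast
  next
    case 2
    have "\<forall>w\<in>box r. w < v2 \<longrightarrow> lk m1 w = lk m3 w" using v1(3) v2(3) 2 by auto
    moreover have "lk m3 v2 < lk m1 v2" using v2 v1(3) 2 by auto
    ultimately show ?thesis unfolding drl_less_alt using v2(1) d by blast
  next
    case 3
    have "\<forall>w\<in>box r. w < v2 \<longrightarrow> lk m1 w = lk m3 w" using v1(3) v2(3) 3 by auto
    moreover have "lk m3 v2 < lk m1 v2" using v2 v1 3 by auto
    ultimately show ?thesis unfolding drl_less_alt using v2(1) d by blast
  qed
qed

lemma drl_asym: "drl_less r m1 m2 \<Longrightarrow> \<not> drl_less r m2 m1"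
  using drl_trans drl_irrefl by blast

definition boxmon :: "nat list \<Rightarrow> mon \<Rightarrow> bool" where
  "boxmon r m \<longleftrightarrow> kys m \<subseteq> box r"

lemma drl_total:
  assumes "boxmon r m1" "boxmon r m2" "m1 \<noteq> m2"
  shows "drl_less r m1 m2 \<or> drl_less r m2 m1"
proof (cases "mdeg m1 = mdeg m2")
  case False
  then have "mdeg m1 < mdeg m2 \<or> mdeg m2 < mdeg m1" by linarith
  then show ?thesis unfolding drl_less_def by blast
next
  case True
  define D where "D = {v\<in>box r. lk m1 v \<noteq> lk m2 v}"
  have fD: "finite D" unfolding D_def using finite_box by simp
  have "\<exists>v. lk m1 v \<noteq> lk m2 v"
  proof (rule ccontr)
    assume "\<not> (\<exists>v. lk m1 v \<noteq> lk m2 v)"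
    then have "m1 = m2" by (intro poly_mapping_eqI) simp
    then show False using assms(3) by simp
  qed
  then obtain v where v: "lk m1 v \<noteq> lk m2 v" by blast
  then have "v \<in> kys m1 \<or> v \<in> kys m2" by (simp add: in_keys_iff) linarith
  then have "v \<in> box r" using assms(1,2) unfolding boxmon_def by blast
  then have "v \<in> D" using v by (simp add: D_def)
  then have ne: "D \<noteq> {}" by blast
  define v0 where "v0 = Min D"
  have v0D: "v0 \<in> D" unfolding v0_def using Min_in[OF fD ne] .
  have below: "\<forall>w\<in>box r. w < v0 \<longrightarrow> lk m1 w = lk m2 w"
  proof (intro ballI impI, rule ccontr)
    fix w assume "w \<in> box r" "w < v0" "lk m1 w \<noteq> lk m2 w"
    then have "w \<in> D" by (simp add: D_def)
    then have "v0 \<le> w" unfolding v0_def using Min_le[OF fD] by blast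
    then show False using \<open>w < v0\<close> by simp
  qed
  have b0: "v0 \<in> box r" using v0D unfolding D_def by blast
  have "lk m1 v0 \<noteq> lk m2 v0" using v0D unfolding D_def by blast
  then consider "lk m2 v0 < lk m1 v0" | "lk m1 v0 < lk m2 v0" by linarith
  then show ?thesis
  proof cases
    case 1 then have "drl_less r m1 m2" unfolding drl_less_alt using True b0 below by blast
    then show ?thesis ..
  next
    case 2
    have "\<forall>w\<in>box r. w < v0 \<longrightarrow> lk m2 w = lk m1 w" using below by simp
    then have "drl_less r m2 m1" unfolding drl_less_alt using True[symmetric] b0 2 by blast
    then show ?thesis ..
  qed
qed

lemma lead_exists:
  assumes "finite S" "S \<noteq> {}" "\<forall>m\<in>S. boxmon r m"
  shows "\<exists>m\<in>S. \<forall>m'\<in>S. m' \<noteq> m \<longrightarrow> drl_less r m' m"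
  using assms
proof (induction S rule: finite_ne_induct)
  case (singleton x)
  then show ?case by blast
next
  case (insert x F)
  then obtain m where m: "m \<in> F" "\<forall>m'\<in>F. m' \<noteq> m \<longrightarrow> drl_less r m' m" by auto
  have "x \<noteq> m" using m insert by auto
  moreover have "boxmon r x" "boxmon r m" using insert.prems m(1) by auto
  ultimately consider "drl_less r x m" | "drl_less r m x" using drl_total by blast
  then show ?case
  proof cases
    case 1
    have "\<forall>m'\<in>insert x F. m' \<noteq> m \<longrightarrow> drl_less r m' m" using 1 m(2) by blast
    then show ?thesis using m(1) by blast
  next
    case 2
    have "\<forall>m'\<in>F. m' \<noteq> x \<longrightarrow> drl_less r m' x"
    proof (intro ballI impI)
      fix m' assume "m' \<in> F" "m' \<noteq> x"
      show "drl_less r m' x"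
      proof (cases "m' = m")
        case True then show ?thesis using 2 by simp
      next
        case False then have "drl_less r m' m" using m(2) \<open>m' \<in> F\<close> by blast
        then show ?thesis using 2 drl_trans by blast
      qed
    qed
    then have "\<forall>m'\<in>insert x F. m' \<noteq> x \<longrightarrow> drl_less r m' x" by blast
    then show ?thesis by blast
  qed
qed

lemma lead_mon_eq:
  assumes "m \<in> kys p" "\<forall>m'\<in>kys p. m' \<noteq> m \<longrightarrow> drl_less r m' m"
  shows "lead_mon r p = m"
  unfolding lead_mon_def
proof (rule the_equality)
  show "m \<in> kys p \<and> (\<forall>m'\<in>kys p. m' \<noteq> m \<longrightarrow> drl_less r m' m)" using assms by blast
next
  fix m1 assume h: "m1 \<in> kys p \<and> (\<forall>m'\<in>kys p. m' \<noteq> m1 \<longrightarrow> drl_less r m' m1)"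
  show "m1 = m"
  proof (rule ccontr)
    assume "m1 \<noteq> m"
    then have "drl_less r m1 m" "drl_less r m m1" using h assms by auto
    then show False using drl_asym by blast
  qed
qed

lemma lead_mon_prop:
  assumes "p \<noteq> 0" "\<forall>m\<in>kys p. boxmon r m"
  shows "lead_mon r p \<in> kys p \<and> (\<forall>m'\<in>kys p. m' \<noteq> lead_mon r p \<longrightarrow> drl_less r m' (lead_mon r p))"
proof -
  have "finite (kys p)" by simp
  moreover have "kys p \<noteq> {}" using assms(1) by simp
  ultimately obtain m where m: "m \<in> kys p" "\<forall>m'\<in>kys p. m' \<noteq> m \<longrightarrow> drl_less r m' m"
    using lead_exists[of "kys p" r] assms(2) by blast
  then have "lead_mon r p = m" by (rule lead_mon_eq)
  then show ?thesis using m by simp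
qed

lemma pr_iff: "p \<in> poly_ring r \<longleftrightarrow> (\<forall>m\<in>kys p. boxmon r m)"
  by (simp add: poly_ring_def boxmon_def)

lemma pr_mult:
  assumes "p \<in> poly_ring r" "q \<in> poly_ring r" shows "p * q \<in> poly_ring r"
  unfolding poly_ring_def
proof (intro CollectI ballI)
  fix m assume "m \<in> kys (p * q)"
  then obtain a b where ab: "m = a + b" "a \<in> kys p" "b \<in> kys q" using keys_mult by blast
  have "kys m \<subseteq> kys a \<union> kys b" unfolding ab(1) by (rule keys_add)
  also have "\<dots> \<subseteq> box r" using assms ab(2,3) unfolding poly_ring_def by blast
  finally show "kys m \<subseteq> box r" .
qed

lemma pr_sum:
  assumes "\<forall>g\<in>S. f g \<in> poly_ring r" shows "sum f S \<in> poly_ring r"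
  unfolding poly_ring_def
proof (intro CollectI ballI)
  fix m assume "m \<in> kys (sum f S)"
  then have "m \<in> (\<Union>g\<in>S. kys (f g))" using keys_sum[of f S] by (rule subsetD[rotated])
  then obtain g where "g \<in> S" "m \<in> kys (f g)" by blast
  then show "kys m \<subseteq> box r" using assms unfolding poly_ring_def by blast
qed

lemma var_mult: "(var a * var b :: 'k::comm_ring_1 mpoly) =
   Poly_Mapping.single (Poly_Mapping.single a 1 + Poly_Mapping.single b 1) 1"
  by (simp add: var_def mult_single)

lemma keys_two: "kys (Poly_Mapping.single a (1::nat) + Poly_Mapping.single b 1) \<subseteq> {a, b}"
  by (rule order_trans[OF keys_add]) simp

lemma upd_box:
  assumes "a \<in> box r" "b \<in> box r" "l < length r" shows "a[l := b ! l] \<in> box r"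
proof -
  have la: "length a = length r" "\<forall>j<length r. 1 \<le> a ! j \<and> a ! j \<le> r ! j"
    using assms(1) unfolding box_def by auto
  have lb: "\<forall>j<length r. 1 \<le> b ! j \<and> b ! j \<le> r ! j"
    using assms(2) unfolding box_def by auto
  have "1 \<le> a[l := b ! l] ! j \<and> a[l := b ! l] ! j \<le> r ! j" if "j < length r" for j
  proof (cases "j = l")
    case True
    then show ?thesis using la(1) assms(3) lb that by simp
  next
    case False
    then show ?thesis using la that by simp
  qed
  then show ?thesis unfolding box_def using la(1) by simp
qed

lemma minor_pr:
  assumes "a \<in> box r" "b \<in> box r" "c \<in> box r" "d \<in> box r"
  shows "(var a * var b - var c * var d :: 'k::comm_ring_1 mpoly) \<in> poly_ring r"
  unfolding poly_ring_def
proof (intro CollectI ballI)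
  fix m assume "m \<in> kys (var a * var b - var c * var d :: 'k mpoly)"
  then have "m \<in> kys (var a * var b :: 'k mpoly) \<or> m \<in> kys (var c * var d :: 'k mpoly)"
    using keys_diff[of "var a * var b :: 'k mpoly" "var c * var d"] by blast
  then have "m = Poly_Mapping.single a 1 + Poly_Mapping.single b 1 \<or>
             m = Poly_Mapping.single c 1 + Poly_Mapping.single d 1"
    by (simp add: var_mult split: if_splits)
  then show "kys m \<subseteq> box r"
  proof
    assume "m = Poly_Mapping.single a 1 + Poly_Mapping.single b 1"
    then have "kys m \<subseteq> {a, b}" using keys_two[of a b] by simp
    then show ?thesis using assms(1,2) by blast
  next
    assume "m = Poly_Mapping.single c 1 + Poly_Mapping.single d 1"
    then have "kys m \<subseteq> {c, d}" using keys_two[of c d] by simp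
    then show ?thesis using assms(3,4) by blast
  qed
qed

lemma minors_pr: "minors2 r \<subseteq> (poly_ring r :: 'k::comm_ring_1 mpoly set)"
proof
  fix g :: "'k mpoly" assume "g \<in> minors2 r"
  then obtain a b l where g: "g = var a * var b - var (a[l := b ! l]) * var (b[l := a ! l])"
    and ab: "a \<in> box r" "b \<in> box r" "l < length r" unfolding minors2_def by blast
  show "g \<in> poly_ring r" unfolding g by (rule minor_pr) (use ab upd_box in auto)
qed

lemma I2_pr: "I2 r \<subseteq> (poly_ring r :: 'k::comm_ring_1 mpoly set)"
proof
  fix f :: "'k mpoly" assume "f \<in> I2 r"
  then obtain S h where S: "finite S" "S \<subseteq> minors2 r" "\<forall>g\<in>S. h g \<in> poly_ring r"
      "f = (\<Sum>g\<in>S. h g * g)" unfolding I2_def ideal_gen_def by blast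
  have "\<forall>g\<in>S. h g * g \<in> poly_ring r" using S(2,3) minors_pr pr_mult by blast
  then show "f \<in> poly_ring r" unfolding S(4) by (rule pr_sum)
qed

lemma one_pr: "(1 :: 'k::comm_ring_1 mpoly) \<in> poly_ring r"
  unfolding poly_ring_def by simp

lemma minors_I2: "minors2 r \<subseteq> (I2 r :: 'k::comm_ring_1 mpoly set)"
proof
  fix g :: "'k mpoly" assume g: "g \<in> minors2 r"
  have "g = (\<Sum>g'\<in>{g}. (\<lambda>_. 1) g' * g')" by simp
  then show "g \<in> I2 r" unfolding I2_def ideal_gen_def using g one_pr
    by (intro CollectI exI[of _ "{g}"] exI[of _ "\<lambda>_. 1"]) auto
qed

definition fib :: "mon \<Rightarrow> nat \<Rightarrow> nat \<Rightarrow> nat" where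
  "fib m l x = (\<Sum>a\<in>{a\<in>kys m. a ! l = x}. lk m a)"

lemma fib_sup: "finite A \<Longrightarrow> kys m \<subseteq> A \<Longrightarrow> fib m l x = (\<Sum>a\<in>{a\<in>A. a ! l = x}. lk m a)"
  unfolding fib_def by (rule sum.mono_neutral_left) (auto simp: in_keys_iff)

lemma fib_add: "fib (m1 + m2) l x = fib m1 l x + fib m2 l x"
proof -
  let ?A = "kys m1 \<union> kys m2"
  have f: "finite ?A" by simp
  have "fib (m1 + m2) l x = (\<Sum>a\<in>{a\<in>?A. a ! l = x}. lk (m1 + m2) a)"
    by (rule fib_sup[OF f keys_add])
  also have "\<dots> = (\<Sum>a\<in>{a\<in>?A. a ! l = x}. lk m1 a) + (\<Sum>a\<in>{a\<in>?A. a ! l = x}. lk m2 a)"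
    by (simp add: lookup_add sum.distrib)
  also have "\<dots> = fib m1 l x + fib m2 l x"
    using fib_sup[OF f Un_upper1] fib_sup[OF f Un_upper2] by simp
  finally show ?thesis .
qed

lemma fib_single: "fib (Poly_Mapping.single a (1::nat)) l x = (if a ! l = x then 1 else 0)"
proof -
  have "{a'\<in>kys (Poly_Mapping.single a (1::nat)). a' ! l = x} = (if a ! l = x then {a} else {})" by auto
  then show ?thesis unfolding fib_def by simp
qed

definition Lf :: "(nat \<Rightarrow> nat \<Rightarrow> nat) \<Rightarrow> 'k::comm_ring_1 mpoly \<Rightarrow> 'k" where
  "Lf F p = (\<Sum>m\<in>{m\<in>kys p. fib m = F}. lk p m)"

lemma Lf_sup: "finite A \<Longrightarrow> kys p \<subseteq> A \<Longrightarrow> Lf F p = (\<Sum>m\<in>{m\<in>A. fib m = F}. lk p m)"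
  unfolding Lf_def by (rule sum.mono_neutral_left) (auto simp: in_keys_iff)

lemma Lf_add: "Lf F (p + q) = Lf F p + Lf F q"
proof -
  let ?A = "kys p \<union> kys q"
  have f: "finite ?A" by simp
  have "Lf F (p + q) = (\<Sum>m\<in>{m\<in>?A. fib m = F}. lk (p + q) m)"
    by (rule Lf_sup[OF f keys_add])
  also have "\<dots> = (\<Sum>m\<in>{m\<in>?A. fib m = F}. lk p m) + (\<Sum>m\<in>{m\<in>?A. fib m = F}. lk q m)"
    by (simp add: lookup_add sum.distrib)
  also have "\<dots> = Lf F p + Lf F q"
    using Lf_sup[OF f Un_upper1] Lf_sup[OF f Un_upper2] by simp
  finally show ?thesis .
qed

lemma Lf_diff: "Lf F (p - q) = Lf F p - Lf F q"
proof -
  let ?A = "kys p \<union> kys q"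
  have f: "finite ?A" by simp
  have "Lf F (p - q) = (\<Sum>m\<in>{m\<in>?A. fib m = F}. lk (p - q) m)"
    by (rule Lf_sup[OF f keys_diff])
  also have "\<dots> = (\<Sum>m\<in>{m\<in>?A. fib m = F}. lk p m) - (\<Sum>m\<in>{m\<in>?A. fib m = F}. lk q m)"
    by (simp add: lookup_minus sum_subtractf)
  also have "\<dots> = Lf F p - Lf F q"
    using Lf_sup[OF f Un_upper1] Lf_sup[OF f Un_upper2] by simp
  finally show ?thesis .
qed

lemma Lf_zero: "Lf F 0 = 0"
  unfolding Lf_def by simp

lemma Lf_sum: "Lf F (sum f S) = (\<Sum>i\<in>S. Lf F (f i))"
proof (cases "finite S")
  case True
  then show ?thesis by (induction S rule: finite_induct) (simp_all add: Lf_zero Lf_add)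
next
  case False
  then show ?thesis by (simp add: Lf_zero)
qed

lemma Lf_single: "Lf F (Poly_Mapping.single m c) = (if fib m = F then c else 0)"
proof -
  have "Lf F (Poly_Mapping.single m c) = (\<Sum>m'\<in>{m'\<in>{m}. fib m' = F}. lk (Poly_Mapping.single m c) m')"
    by (rule Lf_sup) auto
  moreover have "{m'\<in>{m}. fib m' = F} = (if fib m = F then {m} else {})" by auto
  ultimately show ?thesis by simp
qed

lemma expand: "p = (\<Sum>m\<in>kys p. Poly_Mapping.single m (lk p m))"
proof (rule poly_mapping_eqI)
  fix k
  have "lk (\<Sum>m\<in>kys p. Poly_Mapping.single m (lk p m)) k = (\<Sum>m\<in>kys p. if m = k then lk p m else 0)"
    by (simp add: lookup_sum lookup_single when_def)
  also have "\<dots> = lk p k" by (simp add: sum.delta' in_keys_iff)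
  finally show "lk p k = lk (\<Sum>m\<in>kys p. Poly_Mapping.single m (lk p m)) k" by simp
qed

lemma Lf_mult_single:
  "Lf F (h * Poly_Mapping.single \<mu> 1) =
    (\<Sum>m\<in>kys h. if (\<lambda>l x. fib m l x + fib \<mu> l x) = F then lk h m else 0)"
proof -
  have "h * Poly_Mapping.single \<mu> 1 = (\<Sum>m\<in>kys h. Poly_Mapping.single m (lk h m)) * Poly_Mapping.single \<mu> 1"
    using expand[of h] by simp
  also have "\<dots> = (\<Sum>m\<in>kys h. Poly_Mapping.single (m + \<mu>) (lk h m))"
    by (simp add: sum_distrib_right mult_single)
  finally have e: "h * Poly_Mapping.single \<mu> 1 = (\<Sum>m\<in>kys h. Poly_Mapping.single (m + \<mu>) (lk h m))" .
  have fe: "fib (m + \<mu>) = (\<lambda>l x. fib m l x + fib \<mu> l x)" for m by (intro ext) (rule fib_add)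
  show ?thesis unfolding e Lf_sum Lf_single fe ..
qed

lemma Lf_minor:
  assumes "fib \<mu>1 = fib \<mu>2"
  shows "Lf F (h * (Poly_Mapping.single \<mu>1 1 - Poly_Mapping.single \<mu>2 1)) = 0"
  by (simp add: right_diff_distrib Lf_diff Lf_mult_single assms)

lemma fib_minor:
  assumes "a \<in> box r" "b \<in> box r" "L < length r"
  shows "fib (Poly_Mapping.single a 1 + Poly_Mapping.single b 1) =
         fib (Poly_Mapping.single (a[L := b ! L]) 1 + Poly_Mapping.single (b[L := a ! L]) 1)"
proof (intro ext)
  fix l x
  have la: "L < length a" "L < length b" using assms box_len by auto
  show "fib (Poly_Mapping.single a 1 + Poly_Mapping.single b 1) l x =
         fib (Poly_Mapping.single (a[L := b ! L]) 1 + Poly_Mapping.single (b[L := a ! L]) 1) l x"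
  proof (cases "l = L")
    case True
    then show ?thesis using la unfolding fib_add fib_single by simp
  next
    case False
    then have "L \<noteq> l" by simp
    then show ?thesis unfolding fib_add fib_single by simp
  qed
qed

lemma Lf_I2:
  assumes "f \<in> (I2 r :: 'k::comm_ring_1 mpoly set)" shows "Lf F f = 0"
proof -
  obtain S h where S: "finite S" "S \<subseteq> minors2 r" "\<forall>g\<in>S. h g \<in> poly_ring r"
      "f = (\<Sum>g\<in>S. h g * g)" using assms unfolding I2_def ideal_gen_def by blast
  have "Lf F (h g * g) = 0" if "g \<in> S" for g
  proof -
    have "g \<in> minors2 r" using that S(2) by blast
    then obtain a b l where g: "g = var a * var b - var (a[l := b ! l]) * var (b[l := a ! l])"
      and ab: "a \<in> box r" "b \<in> box r" "l < length r" unfolding minors2_def by blast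
    show ?thesis unfolding g var_mult by (rule Lf_minor) (rule fib_minor[OF ab])
  qed
  then show ?thesis unfolding S(4) Lf_sum by simp
qed

definition cle :: "nat list \<Rightarrow> nat list \<Rightarrow> bool" where
  "cle a b \<longleftrightarrow> (\<forall>l<length a. a ! l \<le> b ! l)"

lemma cle_refl: "cle a a" by (simp add: cle_def)

lemma cle_le:
  assumes "length a = length b" "cle a b" shows "a \<le> b"
proof (rule ccontr)
  assume "\<not> a \<le> b"
  then have "b < a" by simp
  then have "lex_less b a" using lex_less_iff assms(1) by simp
  then obtain k where k: "k < length b" "k < length a" "take k b = take k a" "b ! k < a ! k"
    unfolding lex_less_def by blast
  have "a ! k \<le> b ! k" using assms(2) k(2) unfolding cle_def by blast
  then show False using k(4) by simp
qed

lemma mdeg_box: "boxmon r m \<Longrightarrow> mdeg m = (\<Sum>a\<in>box r. lk m a)"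
  unfolding mdeg_def boxmon_def
  by (rule sum.mono_neutral_left[OF finite_box]) (auto simp: in_keys_iff)

lemma fib_box: "boxmon r m \<Longrightarrow> fib m l x = (\<Sum>a\<in>{a\<in>box r. a ! l = x}. lk m a)"
  unfolding boxmon_def by (rule fib_sup[OF finite_box])

lemma mdeg_fib: "boxmon r m \<Longrightarrow> mdeg m = (\<Sum>x\<in>(\<lambda>a. a ! 0) ` box r. fib m 0 x)"
  using sum.image_gen[OF finite_box, of "lk m" r "\<lambda>a. a ! 0"] by (simp add: mdeg_box fib_box)

lemma chain_min:
  assumes bm: "boxmon r m" and bm2: "boxmon r m2" and fe: "fib m = fib m2" and ne: "m \<noteq> m2"
    and ch: "\<forall>a\<in>kys m. \<forall>b\<in>kys m. cle a b \<or> cle b a" and n1: "0 < length r"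
  shows "drl_less r m m2"
proof -
  have deg: "mdeg m = mdeg m2" using mdeg_fib[OF bm] mdeg_fib[OF bm2] fe by simp
  define D where "D = {v\<in>box r. lk m v \<noteq> lk m2 v}"
  have fD: "finite D" unfolding D_def using finite_box by simp
  have "\<exists>v. lk m v \<noteq> lk m2 v"
  proof (rule ccontr)
    assume "\<not> (\<exists>v. lk m v \<noteq> lk m2 v)"
    then have "m = m2" by (intro poly_mapping_eqI) simp
    then show False using ne by simp
  qed
  then obtain v where v: "lk m v \<noteq> lk m2 v" by blast
  then have "v \<in> kys m \<or> v \<in> kys m2" by (simp add: in_keys_iff) linarith
  then have "v \<in> box r" using bm bm2 unfolding boxmon_def by blast
  then have "v \<in> D" using v by (simp add: D_def)
  then have neD: "D \<noteq> {}" by blast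
  define v0 where "v0 = Min D"
  have v0D: "v0 \<in> D" unfolding v0_def using Min_in[OF fD neD] .
  have below: "\<forall>w\<in>box r. w < v0 \<longrightarrow> lk m w = lk m2 w"
  proof (intro ballI impI, rule ccontr)
    fix w assume "w \<in> box r" "w < v0" "lk m w \<noteq> lk m2 w"
    then have "w \<in> D" by (simp add: D_def)
    then have "v0 \<le> w" unfolding v0_def using Min_le[OF fD] by blast
    then show False using \<open>w < v0\<close> by simp
  qed
  have b0: "v0 \<in> box r" using v0D unfolding D_def by blast
  have dif: "lk m v0 \<noteq> lk m2 v0" using v0D unfolding D_def by blast
  have lt: "lk m2 v0 < lk m v0"
  proof (rule ccontr)
    assume "\<not> lk m2 v0 < lk m v0"
    with dif have gt: "lk m v0 < lk m2 v0" by linarith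
    define Q where "Q = {a\<in>kys m. \<not> a < v0} - {v0}"
    have fQ: "finite Q" unfolding Q_def by simp
    have Qm: "Q \<subseteq> kys m" unfolding Q_def by blast
    obtain l where l: "l < length r" and lq: "\<forall>a\<in>Q. a ! l \<noteq> v0 ! l"
    proof (cases "Q = {}")
      case True
      then show ?thesis using that[of 0] n1 by blast
    next
      case False
      define w where "w = Min Q"
      have wQ: "w \<in> Q" unfolding w_def using Min_in[OF fQ False] .
      have wm: "w \<in> kys m" using wQ Qm by blast
      have wb: "w \<in> box r" using wm bm unfolding boxmon_def by blast
      have "v0 < w" using wQ unfolding Q_def by auto
      then have "lex_less v0 w" using lex_less_iff box_len[OF wb] box_len[OF b0] by simp
      then obtain k where k: "k < length v0" "take k v0 = take k w" "v0 ! k < w ! k"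
        unfolding lex_less_def by blast
      have kr: "k < length r" using k(1) box_len[OF b0] by simp
      have "\<forall>a\<in>Q. a ! k \<noteq> v0 ! k"
      proof
        fix a assume aQ: "a \<in> Q"
        have am: "a \<in> kys m" using aQ Qm by blast
        have ab: "a \<in> box r" using am bm unfolding boxmon_def by blast
        have wa: "w \<le> a" unfolding w_def using Min_le[OF fQ aQ] .
        have "cle w a"
        proof (cases "cle a w")
          case True
          then have "a \<le> w" using cle_le box_len[OF ab] box_len[OF wb] by simp
          then have "a = w" using wa by simp
          then show ?thesis by (simp add: cle_refl)
        next
          case False
          then show ?thesis using ch am wm by blast
        qed
        then have "w ! k \<le> a ! k" using kr box_len[OF wb] unfolding cle_def by simp
        then show "a ! k \<noteq> v0 ! k" using k(3) by simp
      qed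
      then show ?thesis using that[of k] kr by blast
    qed
    define x where "x = v0 ! l"
    define B where "B = {a\<in>box r. a ! l = x}"
    have fB: "finite B" unfolding B_def using finite_box by simp
    let ?L = "{a. a < v0}"
    have s1: "(\<Sum>a\<in>B \<inter> ?L. lk m a) = (\<Sum>a\<in>B \<inter> ?L. lk m2 a)"
      by (rule sum.cong) (use below B_def in auto)
    have vB: "v0 \<in> B - ?L" unfolding B_def x_def using b0 by simp
    have "(\<Sum>a\<in>B - ?L. lk m a) = lk m v0 + (\<Sum>a\<in>B - ?L - {v0}. lk m a)"
      using sum.remove[of "B - ?L" v0 "lk m"] fB vB by simp
    also have "(\<Sum>a\<in>B - ?L - {v0}. lk m a) = 0"
    proof (rule sum.neutral, rule ballI)
      fix a assume a: "a \<in> B - ?L - {v0}"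
      show "lk m a = 0"
      proof (rule ccontr)
        assume "lk m a \<noteq> 0"
        then have "a \<in> kys m" by (simp add: in_keys_iff)
        then have "a \<in> Q" using a unfolding Q_def by simp
        then have "a ! l \<noteq> v0 ! l" using lq by blast
        then show False using a unfolding B_def x_def by simp
      qed
    qed
    finally have s2: "(\<Sum>a\<in>B - ?L. lk m a) = lk m v0" by simp
    have s3: "lk m2 v0 \<le> (\<Sum>a\<in>B - ?L. lk m2 a)"
      by (rule member_le_sum) (use vB fB in auto)
    have "fib m l x = (\<Sum>a\<in>B \<inter> ?L. lk m a) + (\<Sum>a\<in>B - ?L. lk m a)"
      unfolding fib_box[OF bm] B_def[symmetric] by (rule sum.Int_Diff[OF fB])
    also have "\<dots> < (\<Sum>a\<in>B \<inter> ?L. lk m2 a) + (\<Sum>a\<in>B - ?L. lk m2 a)"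
      using s1 s2 s3 gt by linarith
    also have "\<dots> = fib m2 l x"
      unfolding fib_box[OF bm2] B_def[symmetric] by (rule sum.Int_Diff[OF fB, symmetric])
    finally show False using fe by simp
  qed
  show ?thesis unfolding drl_less_alt using deg b0 lt below by blast
qed

lemma lk_two: "lk (Poly_Mapping.single a (1::nat) + Poly_Mapping.single b 1) w =
   (if w = a then 1 else 0) + (if w = b then 1 else 0)"
  by (simp add: lookup_add lookup_single when_def)

lemma mdeg_two:
  assumes "a \<noteq> b" shows "mdeg (Poly_Mapping.single a (1::nat) + Poly_Mapping.single b 1) = 2"
proof -
  let ?M = "Poly_Mapping.single a (1::nat) + Poly_Mapping.single b 1"
  have "w \<in> kys ?M \<longleftrightarrow> w = a \<or> w = b" for w
    unfolding in_keys_iff lk_two by auto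
  then have k: "kys ?M = {a, b}" by blast
  have "mdeg ?M = lk ?M a + lk ?M b" unfolding mdeg_def k using assms by simp
  also have "\<dots> = 2" unfolding lk_two using assms by simp
  finally show ?thesis .
qed

lemma minor_lead:
  assumes ab: "a \<in> box r" "b \<in> box r" and alb: "a < b" and l: "l < length r" and bla: "b ! l < a ! l"
    and am: "a \<in> kys m0" and bm: "b \<in> kys m0"
  shows "\<exists>g\<in>(minors2 r :: 'k::field mpoly set). g \<noteq> 0 \<and> mon_dvd (lead_mon r g) m0"
proof -
  have la: "length a = length r" and lb: "length b = length r" using ab box_len by auto
  have "lex_less a b" using alb lex_less_iff la lb by simp
  then obtain k where k: "k < length a" "take k a = take k b" "a ! k < b ! k"
    unfolding lex_less_def by blast
  have kl: "k < l"
  proof (rule ccontr)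
    assume "\<not> k < l"
    moreover have "l \<noteq> k" using k(3) bla by auto
    ultimately have "l < k" by simp
    then have "a ! l = b ! l" using k(2) by (metis nth_take)
    then show False using bla by simp
  qed
  define a' where "a' = a[l := b ! l]"
  define b' where "b' = b[l := a ! l]"
  have a'b: "a' \<in> box r" unfolding a'_def using upd_box ab l by blast
  have b'b: "b' \<in> box r" unfolding b'_def using upd_box ab l by blast
  have "lex_less a' a" unfolding lex_less_def
    by (rule exI[of _ l]) (use l la bla in \<open>simp add: a'_def\<close>)
  then have a'a: "a' < a" using lex_less_iff box_len[OF a'b] la by simp
  have "take k b' = take k b" unfolding b'_def using kl by simp
  then have "lex_less a b'" unfolding lex_less_def using k kl la lb
    by (intro exI[of _ k]) (simp add: b'_def)
  then have ab': "a < b'" using lex_less_iff box_len[OF b'b] la by simp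
  have neq: "a \<noteq> b" "a' \<noteq> a" "a' \<noteq> b" "a' \<noteq> b'" using alb a'a ab' by auto
  define M1 where "M1 = Poly_Mapping.single a (1::nat) + Poly_Mapping.single b 1"
  define M2 where "M2 = Poly_Mapping.single a' (1::nat) + Poly_Mapping.single b' 1"
  define g where "g = (var a * var b - var a' * var b' :: 'k mpoly)"
  have gM: "g = Poly_Mapping.single M1 1 - Poly_Mapping.single M2 1"
    unfolding g_def M1_def M2_def var_mult ..
  have M1a': "lk M1 a' = 0" unfolding M1_def lk_two using neq by simp
  have M2a': "lk M2 a' = 1" unfolding M2_def lk_two using neq by simp
  have M12: "M1 \<noteq> M2" using M1a' M2a' by auto
  have gM1: "lk g M1 = 1" unfolding gM using M12 by (simp add: lookup_minus lookup_single when_def)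
  then have M1k: "M1 \<in> kys g" by (simp add: in_keys_iff)
  have kg: "kys g \<subseteq> {M1, M2}"
    unfolding gM by (rule order_trans[OF keys_diff]) simp
  have dM: "drl_less r M2 M1"
  proof -
    have "mdeg M1 = 2" unfolding M1_def by (rule mdeg_two[OF neq(1)])
    moreover have "mdeg M2 = 2" unfolding M2_def by (rule mdeg_two[OF neq(4)])
    ultimately have "mdeg M2 = mdeg M1" by simp
    moreover have "\<forall>w\<in>box r. w < a' \<longrightarrow> lk M2 w = lk M1 w"
    proof (intro ballI impI)
      fix w assume "w < a'"
      then have "w \<noteq> a" "w \<noteq> b" "w \<noteq> a'" "w \<noteq> b'" using a'a alb ab' by auto
      then show "lk M2 w = lk M1 w" unfolding M1_def M2_def lk_two by simp
    qed
    moreover have "lk M1 a' < lk M2 a'" using M1a' M2a' by simp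
    ultimately show ?thesis unfolding drl_less_alt using a'b by blast
  qed
  have lead: "lead_mon r g = M1"
  proof (rule lead_mon_eq[OF M1k], intro ballI impI)
    fix m' assume "m' \<in> kys g" "m' \<noteq> M1"
    then have "m' = M2" using kg by blast
    then show "drl_less r m' M1" using dM by simp
  qed
  have gmin: "g \<in> minors2 r" unfolding minors2_def g_def a'_def b'_def using ab l by blast
  have gnz: "g \<noteq> 0" using M1k by auto
  have "mon_dvd M1 m0" unfolding mon_dvd_def
  proof
    fix v
    have "lk m0 a \<ge> 1" "lk m0 b \<ge> 1" using am bm by (auto simp: in_keys_iff)
    then show "lk M1 v \<le> lk m0 v" unfolding M1_def lk_two using neq(1) by auto
  qed
  then show ?thesis using gmin gnz lead by blast
qed

theorem theorem1p11:
  fixes r :: "nat list"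
  assumes "length r \<ge> 2"
  shows "groebner_basis r (minors2 r :: 'k::field mpoly set) (I2 r)"
  unfolding groebner_basis_def
proof (intro conjI ballI impI)
  show "minors2 r \<subseteq> I2 r" by (rule minors_I2)
next
  fix f :: "'k mpoly" assume fI: "f \<in> I2 r" and fnz: "f \<noteq> 0"
  have "f \<in> poly_ring r" using fI I2_pr by blast
  then have bf: "\<forall>m\<in>kys f. boxmon r m" by (simp add: pr_iff)
  define m0 where "m0 = lead_mon r f"
  have m0k: "m0 \<in> kys f" and m0d: "\<forall>m'\<in>kys f. m' \<noteq> m0 \<longrightarrow> drl_less r m' m0"
    using lead_mon_prop[OF fnz bf] unfolding m0_def by auto
  have L0: "Lf (fib m0) f = 0" using Lf_I2[OF fI] .
  have "\<exists>m'\<in>kys f. m' \<noteq> m0 \<and> fib m' = fib m0"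
  proof (rule ccontr)
    assume "\<not> ?thesis"
    then have "{m\<in>kys f. fib m = fib m0} = {m0}" using m0k by auto
    then have "Lf (fib m0) f = lk f m0" unfolding Lf_def by simp
    then show False using L0 m0k by (simp add: in_keys_iff)
  qed
  then obtain m' where m': "m' \<in> kys f" "m' \<noteq> m0" "fib m' = fib m0" by blast
  have d1: "drl_less r m' m0" using m0d m' by blast
  have "\<not> (\<forall>a\<in>kys m0. \<forall>b\<in>kys m0. cle a b \<or> cle b a)"
  proof
    assume ch: "\<forall>a\<in>kys m0. \<forall>b\<in>kys m0. cle a b \<or> cle b a"
    have "drl_less r m0 m'"
      by (rule chain_min) (use bf m0k m' ch assms in auto)
    then show False using d1 drl_asym by blast
  qed
  then obtain a b where abk: "a \<in> kys m0" "b \<in> kys m0" and nab: "\<not> cle a b" "\<not> cle b a" by blast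
  have ab: "a \<in> box r" "b \<in> box r" using abk bf m0k unfolding boxmon_def by auto
  have "a \<noteq> b" using nab cle_refl by blast
  then consider "a < b" | "b < a" by fastforce
  then have "\<exists>g\<in>(minors2 r :: 'k mpoly set). g \<noteq> 0 \<and> mon_dvd (lead_mon r g) m0"
  proof cases
    case 1
    obtain l where l: "l < length a" "\<not> a ! l \<le> b ! l" using nab(1) unfolding cle_def by blast
    have lr: "l < length r" using l(1) box_len[OF ab(1)] by simp
    have "b ! l < a ! l" using l(2) by simp
    then show ?thesis by (rule minor_lead[OF ab 1 lr _ abk])
  next
    case 2
    obtain l where l: "l < length b" "\<not> b ! l \<le> a ! l" using nab(2) unfolding cle_def by blast
    have lr: "l < length r" using l(1) box_len[OF ab(2)] by simp
    have "a ! l < b ! l" using l(2) by simp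
    then show ?thesis by (rule minor_lead[OF ab(2) ab(1) 2 lr _ abk(2) abk(1)])
  qed
  then show "\<exists>g\<in>(minors2 r :: 'k mpoly set). g \<noteq> 0 \<and> mon_dvd (lead_mon r g) (lead_mon r f)"
    unfolding m0_def .
qed

end
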